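(* Consider an instance of the Side-Access Compact Retrieval Problem, a feasible solution, a cycle $c$ of it, and the set $Y$ of targets retrieved in cycle $c$. List the distinct heights $\{h_c(b):b\in Y\}$ in increasing order as $h_1<\dots<h_p$ and let $s_i=\max\{s(b): b\in Y,\ h_c(b)=h_i\}$. Then there exists an index $\ell\in\{1,\dots,p\}$ such that $s_1\le s_2\le\dots\le s_\ell\ge s_{\ell+1}\ge\dots\ge s_p$.
   Context: A slice is a sequence of stacks $T=(1,\dots,m)$, indexed from the entry side (stack $1$) outward; "left" means smaller index. Stack $t$ initially consists of $h(t)\ge0$ unit loads (ULs) stacked without gaps; a UL at height $k$ has exactly $k$ ULs below it in its stack. A pick-list $\mathcal B$ of target ULs is given; target $b$ lies in stack $s(b)$ at initial height $h(b)$. Retrieval proceeds in cycles $c=1,2,\dots$; $h_c(t)$, $h_c(b)$ are the heights of stack $t$ and of a not-yet-retrieved target $b$ at the start of cycle $c$ ($h_1=h$). In cycle $c$ one chooses clearance levels $\ell_c(t)\in\{0,\dots,h_c(t)\}$: the top $e_c(t)=h_c(t)-\ell_c(t)$ ULs of stack $t$ are lifted for the whole cycle. Then a sequence $(b_{c,1},\dots,b_{c,k})$ of targets is retrieved, with residual heights $d_{c,0}=\ell_c$ and $d_{c,i}(t)=d_{c,i-1}(t)-1$ if $t=s(b_{c,i})$, else unchanged. Retrieving $b$ (stack $t$, height $h=h_c(b)$) as the $i$-th retrieval requires accessibility: (a) $d_{c,i-1}(t)=h+1$ and (b) $d_{c,i-1}(t')=h$ for all $t'<t$. Afterwards lifted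 ULs are lowered, $h_{c+1}(t)=d_{c,k}(t)+e_c(t)$, and each remaining target's height decreases by the number of targets retrieved in cycle $c$ below it in its stack. Non-targets are never removed. A solution is feasible if every target is retrieved exactly once and is accessible when retrieved. *)

theory Defs
  imports Main
begin

text \<open>Stacks are numbered 1..m (stack 1 at the entry side).
  Targets are elements of a finite set B of some type 'b;
  s b is the stack of target b and hb b its initial height.
  A state at the start of a cycle is a triple (H, TH, R): stack heights H,
  current target heights TH, and set R of already retrieved targets.
  A cycle is a pair (lv, bs) of clearance levels lv and the retrieval sequence bs.\<close>

type_synonym 'b state = "(nat \<Rightarrow> nat) \<times> ('b \<Rightarrow> nat) \<times> 'b set"
type_synonym 'b cycle = "(nat \<Rightarrow> nat) \<times> 'b list"

definition valid_instance ::
  "nat \<Rightarrow> (nat \<Rightarrow> nat) \<Rightarrow> 'b set \<Rightarrow> ('b \<Rightarrow> nat) \<Rightarrow> ('b \<Rightarrow> nat) \<Rightarrow> bool" where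
  "valid_instance m h0 B s hb \<longleftrightarrow>
     finite B \<and>
     (\<forall>b\<in>B. s b \<in> {1..m} \<and> hb b < h0 (s b)) \<and>
     inj_on (\<lambda>b. (s b, hb b)) B"

text \<open>Residual heights d_{c,i} after retrieving the list xs in a cycle with
  clearance levels lv.\<close>
definition resid :: "(nat \<Rightarrow> nat) \<Rightarrow> ('b \<Rightarrow> nat) \<Rightarrow> 'b list \<Rightarrow> nat \<Rightarrow> nat" where
  "resid lv s xs t = lv t - length (filter (\<lambda>b. s b = t) xs)"

definition accessible ::
  "nat \<Rightarrow> ('b \<Rightarrow> nat) \<Rightarrow> ('b \<Rightarrow> nat) \<Rightarrow> (nat \<Rightarrow> nat) \<Rightarrow> 'b \<Rightarrow> bool" where
  "accessible m s TH d b \<longleftrightarrow>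
     d (s b) = TH b + 1 \<and> (\<forall>t'\<in>{1..<s b}. d t' = TH b)"

definition cycle_ok ::
  "nat \<Rightarrow> 'b set \<Rightarrow> ('b \<Rightarrow> nat) \<Rightarrow> 'b state \<Rightarrow> 'b cycle \<Rightarrow> bool" where
  "cycle_ok m B s st cy \<longleftrightarrow>
     (case st of (H, TH, R) \<Rightarrow> case cy of (lv, bs) \<Rightarrow>
        (\<forall>t\<in>{1..m}. lv t \<le> H t) \<and>
        distinct bs \<and> set bs \<subseteq> B - R \<and>
        (\<forall>i<length bs. accessible m s TH (resid lv s (take i bs)) (bs ! i)))"

definition next_state ::
  "('b \<Rightarrow> nat) \<Rightarrow> 'b state \<Rightarrow> 'b cycle \<Rightarrow> 'b state" where
  "next_state s st cy =
     (case st of (H, TH, R) \<Rightarrow> case cy of (lv, bs) \<Rightarrow>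
        ((\<lambda>t. resid lv s bs t + (H t - lv t)),
         (\<lambda>b. TH b - length (filter (\<lambda>b'. s b' = s b \<and> TH b' < TH b) bs)),
         R \<union> set bs))"

text \<open>state_at h0 hb s cs c = state at the start of cycle c+1 (0-indexed c).\<close>
fun state_at ::
  "(nat \<Rightarrow> nat) \<Rightarrow> ('b \<Rightarrow> nat) \<Rightarrow> ('b \<Rightarrow> nat) \<Rightarrow> 'b cycle list \<Rightarrow> nat \<Rightarrow> 'b state" where
  "state_at h0 hb s cs 0 = (h0, hb, {})"
| "state_at h0 hb s cs (Suc c) = next_state s (state_at h0 hb s cs c) (cs ! c)"

definition feasible ::
  "nat \<Rightarrow> (nat \<Rightarrow> nat) \<Rightarrow> 'b set \<Rightarrow> ('b \<Rightarrow> nat) \<Rightarrow> ('b \<Rightarrow> nat) \<Rightarrow> 'b cycle list \<Rightarrow> bool" where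
  "feasible m h0 B s hb cs \<longleftrightarrow>
     (\<forall>c<length cs. cycle_ok m B s (state_at h0 hb s cs c) (cs ! c)) \<and>
     snd (snd (state_at h0 hb s cs (length cs))) = B"

end

theory Submission
  imports Defs
begin

lemma ivt_nat:
  fixes f :: "nat \<Rightarrow> nat"
  assumes step: "\<And>k. k < n \<Longrightarrow> f (Suc k) \<le> f k \<and> f k \<le> Suc (f (Suc k))"
  shows "k1 \<le> k2 \<Longrightarrow> k2 \<le> n \<Longrightarrow> Suc v \<le> f k1 \<Longrightarrow> f k2 \<le> v \<Longrightarrow>
     \<exists>k. k1 \<le> k \<and> k < k2 \<and> f k = Suc v \<and> f (Suc k) = v"
proof (induction k2)
  case 0
  then show ?case by simp
next
  case (Suc k2)
  show ?case
  proof (cases "f k2 \<le> v")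
    case True
    with Suc have "k1 \<le> k2"
      using not_less_eq_eq by (metis le_SucE)
    with Suc True show ?thesis by (metis Suc_leD less_SucI)
  next
    case False
    have "k1 \<le> k2" using Suc False by (cases "k1 = Suc k2") auto
    with False step[of k2] Suc show ?thesis by (intro exI[of _ k2]) auto
  qed
qed

lemma unimodal:
  fixes S :: "nat \<Rightarrow> nat"
  assumes nv: "\<And>i j k. 1 \<le> i \<Longrightarrow> i < j \<Longrightarrow> j < k \<Longrightarrow> k \<le> p \<Longrightarrow> \<not> (S j < S i \<and> S j < S k)"
    and p1: "1 \<le> p"
  shows "\<exists>l\<in>{1..p}. (\<forall>i j. 1 \<le> i \<and> i \<le> j \<and> j \<le> l \<longrightarrow> S i \<le> S j) \<and>
                   (\<forall>i j. l \<le> i \<and> i \<le> j \<and> j \<le> p \<longrightarrow> S j \<le> S i)"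
proof -
  have fin: "finite (S ` {1..p})" and ne: "S ` {1..p} \<noteq> {}" using p1 by auto
  obtain l where l: "l \<in> {1..p}" "S l = Max (S ` {1..p})"
    using Max_in[OF fin ne] by auto
  have mx: "\<And>i. i \<in> {1..p} \<Longrightarrow> S i \<le> S l" using l fin by auto
  show ?thesis
  proof (intro bexI[OF _ l(1)] conjI allI impI)
    fix i j assume a: "1 \<le> i \<and> i \<le> j \<and> j \<le> l"
    show "S i \<le> S j"
    proof (rule ccontr)
      assume c: "\<not> S i \<le> S j"
      have "S i \<le> S l" using mx a l(1) by auto
      hence "j \<noteq> l" "i \<noteq> j" using c by auto
      thus False using nv[of i j l] a c l(1) mx by fastforce
    qed
  next
    fix i j assume a: "l \<le> i \<and> i \<le> j \<and> j \<le> p"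
    show "S j \<le> S i"
    proof (rule ccontr)
      assume c: "\<not> S j \<le> S i"
      have "S j \<le> S l" using mx a l(1) by auto
      hence "i \<noteq> l" "i \<noteq> j" using c by auto
      have "l < i" "1 \<le> l" "S j \<le> S l" using a l(1) mx \<open>i \<noteq> l\<close> by auto
      thus False using nv[of l i j] a c \<open>i \<noteq> j\<close> by auto
    qed
  qed
qed

theorem lemma3:
  fixes m :: nat and h0 :: "nat \<Rightarrow> nat" and B :: "'b set"
    and s hb :: "'b \<Rightarrow> nat" and cs :: "'b cycle list" and c :: nat
  assumes "valid_instance m h0 B s hb"
    and "feasible m h0 B s hb cs"
    and "c < length cs"
    and "Y = set (snd (cs ! c))"
    and "Y \<noteq> {}"
    and "TH = fst (snd (state_at h0 hb s cs c))"
    and "hs = sorted_list_of_set (TH ` Y)"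
    and "p = length hs"
    and "S = (\<lambda>i. Max {s b | b. b \<in> Y \<and> TH b = hs ! (i - 1)})"
  shows "\<exists>l\<in>{1..p}. (\<forall>i j. 1 \<le> i \<and> i \<le> j \<and> j \<le> l \<longrightarrow> S i \<le> S j) \<and>
                   (\<forall>i j. l \<le> i \<and> i \<le> j \<and> j \<le> p \<longrightarrow> S j \<le> S i)"
proof (rule unimodal)
  obtain lv bs where cy: "cs ! c = (lv, bs)" by fastforce
  obtain H TH' R where st: "state_at h0 hb s cs c = (H, TH', R)" by (metis prod_cases3)
  have TH': "TH' = TH" using assms(6) st by simp
  have ok: "cycle_ok m B s (state_at h0 hb s cs c) (cs ! c)"
    using assms(2,3) unfolding feasible_def by blast
  have sub: "set bs \<subseteq> B" using ok unfolding cycle_ok_def st cy by auto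
  have acc: "\<And>i. i < length bs \<Longrightarrow> accessible m s TH (resid lv s (take i bs)) (bs ! i)"
    using ok unfolding cycle_ok_def st cy TH' by auto
  have Y: "Y = set bs" using assms(4) cy by simp
  have finY: "finite Y" using Y by simp
  have setH: "set hs = TH ` Y" using assms(7) finY by simp
  have sH: "sorted_wrt (<) hs" using assms(7) by simp
  show "1 \<le> p" using assms(5,8) setH by (cases hs) auto
  define d where "d = (\<lambda>k t. resid lv s (take k bs) t)"
  have stp: "\<And>k t. k < length bs \<Longrightarrow> d (Suc k) t \<le> d k t \<and> d k t \<le> Suc (d (Suc k) t)
        \<and> (s (bs ! k) \<noteq> t \<longrightarrow> d (Suc k) t = d k t)"
    unfolding d_def resid_def by (simp add: take_Suc_conv_app_nth; arith)
  have mono: "\<And>k1 k2 t. k1 \<le> k2 \<Longrightarrow> d k2 t \<le> d k1 t"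
  proof -
    fix k1 k2 :: nat and t assume "k1 \<le> k2"
    then obtain r where "k2 = k1 + r" using le_Suc_ex by blast
    hence "take k2 bs = take k1 bs @ take r (drop k1 bs)" by (simp add: take_add)
    thus "d k2 t \<le> d k1 t" unfolding d_def resid_def by simp
  qed
  have Sdef: "\<And>i. S i = Max {s b | b. b \<in> Y \<and> TH b = hs ! (i - 1)}" using assms(9) by simp
  have finSet: "\<And>v. finite {s b | b. b \<in> Y \<and> TH b = v}" using finY by simp
  have Sge: "\<And>b i. b \<in> Y \<Longrightarrow> TH b = hs ! (i - 1) \<Longrightarrow> s b \<le> S i"
    unfolding Sdef using finSet by (intro Max_ge) auto
  have Sin: "\<And>i. 1 \<le> i \<Longrightarrow> i \<le> p \<Longrightarrow> \<exists>b\<in>Y. TH b = hs ! (i - 1) \<and> s b = S i"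
  proof -
    fix i assume "1 \<le> i" "i \<le> p"
    hence "i - 1 < length hs" using assms(8) by simp
    hence "hs ! (i - 1) \<in> TH ` Y" using setH nth_mem by blast
    hence ne: "{s b | b. b \<in> Y \<and> TH b = hs ! (i - 1)} \<noteq> {}" by auto
    show "\<exists>b\<in>Y. TH b = hs ! (i - 1) \<and> s b = S i"
      using Max_in[OF finSet ne] unfolding Sdef by auto
  qed
  have pos: "\<And>b. b \<in> Y \<Longrightarrow> 1 \<le> s b"
    using assms(1) sub Y unfolding valid_instance_def by auto
  fix i j k assume ijk: "1 \<le> i" "i < j" "j < k" "k \<le> p"
  show "\<not> (S j < S i \<and> S j < S k)"
  proof
    assume v: "S j < S i \<and> S j < S k"
    have ip: "i \<le> p" "1 \<le> k" using ijk by auto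
    obtain a where a: "a \<in> Y" "TH a = hs ! (i - 1)" "s a = S i" using Sin[OF ijk(1) ip(1)] by blast
    obtain e where e: "e \<in> Y" "TH e = hs ! (k - 1)" "s e = S k" using Sin[OF ip(2) ijk(4)] by blast
    have hij: "hs ! (i - 1) < hs ! (j - 1)" "hs ! (j - 1) < hs ! (k - 1)"
      using sorted_wrt_nth_less[OF sH] ijk assms(8) by auto
    define u where "u = min (s a) (s e)"
    have u1: "1 \<le> u" using pos[OF a(1)] pos[OF e(1)] unfolding u_def by linarith
    obtain ka where ka: "ka < length bs" "bs ! ka = a" using a(1) Y by (metis in_set_conv_nth)
    obtain ke where ke: "ke < length bs" "bs ! ke = e" using e(1) Y by (metis in_set_conv_nth)
    have da: "d ka u \<le> Suc (TH a)"
      using acc[OF ka(1)] u1 ka(2) unfolding accessible_def d_def u_def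
      by (cases "s a \<le> s e") auto
    have de: "TH e \<le> d ke u"
      using acc[OF ke(1)] u1 ke(2) unfolding accessible_def d_def u_def
      by (cases "s e \<le> s a") auto
    have "ke < ka"
    proof (rule ccontr)
      assume "\<not> ke < ka"
      hence "d ke u \<le> d ka u" using mono by simp
      thus False using da de hij a e by simp
    qed
    have step': "\<And>k. k < length bs \<Longrightarrow> d (Suc k) u \<le> d k u \<and> d k u \<le> Suc (d (Suc k) u)"
      using stp by blast
    have g1: "Suc (hs ! (j - 1)) \<le> d ke u" using de e hij by simp
    have g2: "d ka u \<le> hs ! (j - 1)" using da a hij by simp
    obtain q where q: "ke \<le> q" "q < ka" "d q u = Suc (hs ! (j - 1))" "d (Suc q) u = hs ! (j - 1)"
      using ivt_nat[of "length bs" "\<lambda>k. d k u", OF step' _ _ g1 g2] \<open>ke < ka\<close> ka(1) by auto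
    have qb: "q < length bs" using q ka by simp
    have sq: "s (bs ! q) = u" using stp[OF qb, of u] q by auto
    have "TH (bs ! q) = hs ! (j - 1)" using acc[OF qb] sq q unfolding accessible_def d_def by simp
    moreover have "bs ! q \<in> Y" using qb Y by simp
    ultimately have "u \<le> S j" using Sge sq by metis
    thus False using v a e u_def by linarith
  qed
qed

end
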